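(* Fix $c>0$, $0\le\alpha\le1$, $t=\lfloor cn^\alpha\rfloor$ with $1\le t\le\frac{n+1}{2}$. With $s=n-4t+2$, $\Delta_n=(n+1)^2+4s$, $\rho_n=\frac{-(s+1)+\sqrt{\Delta_n}}{4t}$, $c_n=2t\rho_n^2+n+1-2t$, $\lambda_m=\frac{n-3+\sqrt{\Delta_n}}{2n}$, $\theta_m=\arccos\lambda_m$, define $\beta_+\in\mathbb{C}^{\mathcal{A}}$ by $$\beta_+(a)=\frac{1}{\sqrt{nc_n}\sin\theta_m}\times\begin{cases}-\rho_n(1+\cos\theta_m),&a\in\mathcal{A}_1,\\ \rho_n(1+\cos\theta_m),&a\in\mathcal{A}_2,\\ \rho_n(1-\cos\theta_m),&a\in\mathcal{A}_3,\\ \rho_n-\cos\theta_m,&a\in\mathcal{A}_4,\\ 1-\rho_n\cos\theta_m,&a\in\mathcal{A}_5,\\ 1-\cos\theta_m,&a\in\mathcal{A}_6.\end{cases}$$ Then the finding probability of $\beta_+$ on the marked edges, $$FP_n=\sum_{a\in\mathcal{M}}\big(|\beta_+(a)|^2+|\beta_+(a^{-1})|^2\big)=\frac{2t\rho_n^2(1+\cos\theta_m)^2}{nc_n\sin^2\theta_m},$$ satisfies $FP_n=1-o(1)$ as $n\to\infty$.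
   Context: Setting. $K_{n+1}$ is the complete graph on the vertex set $V$ with $|V|=n+1$, edge set $E$. The arc set is $\mathcal{A}=\{(x,y): x\ne y\}$; for $a=(x,y)$, $o(a)=x$, $t(a)=y$, $a^{-1}=(y,x)$. A map $\sigma:\mathcal{A}\to\{\pm1\}$ satisfies: $\sigma(a)=-1$ implies $\sigma(a^{-1})=1$. $\mathcal{M}=\{a:\sigma(a)=-1\}$, $\mathcal{M}^{-1}=\{a^{-1}:a\in\mathcal{M}\}$, $\tau(xy)=\sigma((x,y))\sigma((y,x))$, $M=\{e\in E:\tau(e)=-1\}$ (marked edges), assumed to be a $t$-matching (set of $t$ pairwise vertex-disjoint edges), and $\partial M$ is the set of endpoints of edges of $M$. Partition: $\mathcal{A}_1=\mathcal{M}$; $\mathcal{A}_2=\mathcal{M}^{-1}$; $\mathcal{A}_3=\{a\notin\mathcal{M}\cup\mathcal{M}^{-1}: t(a),o(a)\in\partial M\}$; $\mathcal{A}_4=\{a: t(a)\in\partial M,\ o(a)\notin\partial M\}$; $\mathcal{A}_5=\{a: t(a)\notin\partial M,\ o(a)\in\partial M\}$; $\mathcal{A}_6=\{a:t(a),o(a)\notin\partial M\}$. *)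

theory Defs
  imports Complex_Main
begin

definition arcs :: "'v set \<Rightarrow> ('v \<times> 'v) set" where
  "arcs V = {(x, y). x \<in> V \<and> y \<in> V \<and> x \<noteq> y}"

definition rev_arc :: "'v \<times> 'v \<Rightarrow> 'v \<times> 'v" where
  "rev_arc a = (snd a, fst a)"

definition sigma_ok :: "'v set \<Rightarrow> ('v \<times> 'v \<Rightarrow> int) \<Rightarrow> bool" where
  "sigma_ok V \<sigma> \<longleftrightarrow> (\<forall>a \<in> arcs V. (\<sigma> a = 1 \<or> \<sigma> a = -1) \<and>
                       (\<sigma> a = -1 \<longrightarrow> \<sigma> (rev_arc a) = 1))"

definition Mcal :: "'v set \<Rightarrow> ('v \<times> 'v \<Rightarrow> int) \<Rightarrow> ('v \<times> 'v) set" where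
  "Mcal V \<sigma> = {a \<in> arcs V. \<sigma> a = -1}"

definition marked_edges :: "'v set \<Rightarrow> ('v \<times> 'v \<Rightarrow> int) \<Rightarrow> 'v set set" where
  "marked_edges V \<sigma> = {{x, y} | x y. (x, y) \<in> arcs V \<and> \<sigma> (x, y) * \<sigma> (y, x) = -1}"

definition is_t_matching :: "'v set set \<Rightarrow> nat \<Rightarrow> bool" where
  "is_t_matching M t \<longleftrightarrow> finite M \<and> card M = t \<and>
      (\<forall>e \<in> M. \<forall>f \<in> M. e \<noteq> f \<longrightarrow> e \<inter> f = {})"

definition bdry :: "'v set set \<Rightarrow> 'v set" where
  "bdry M = \<Union> M"

text \<open>Index i of the class A_i (i = 1..6) containing an arc a.\<close>
definition arc_class :: "'v set \<Rightarrow> ('v \<times> 'v \<Rightarrow> int) \<Rightarrow> 'v \<times> 'v \<Rightarrow> nat" where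
  "arc_class V \<sigma> a =
     (let B = bdry (marked_edges V \<sigma>) in
      if a \<in> Mcal V \<sigma> then 1
      else if a \<in> rev_arc ` Mcal V \<sigma> then 2
      else if snd a \<in> B \<and> fst a \<in> B then 3
      else if snd a \<in> B \<and> fst a \<notin> B then 4
      else if snd a \<notin> B \<and> fst a \<in> B then 5
      else 6)"

definition s_par :: "nat \<Rightarrow> nat \<Rightarrow> real" where
  "s_par n t = real n - 4 * real t + 2"

definition Delta_par :: "nat \<Rightarrow> nat \<Rightarrow> real" where
  "Delta_par n t = (real n + 1)^2 + 4 * s_par n t"

definition rho_par :: "nat \<Rightarrow> nat \<Rightarrow> real" where
  "rho_par n t = (- (s_par n t + 1) + sqrt (Delta_par n t)) / (4 * real t)"

definition c_par :: "nat \<Rightarrow> nat \<Rightarrow> real" where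
  "c_par n t = 2 * real t * (rho_par n t)^2 + real n + 1 - 2 * real t"

definition lambda_par :: "nat \<Rightarrow> nat \<Rightarrow> real" where
  "lambda_par n t = (real n - 3 + sqrt (Delta_par n t)) / (2 * real n)"

definition theta_par :: "nat \<Rightarrow> nat \<Rightarrow> real" where
  "theta_par n t = arccos (lambda_par n t)"

definition beta_plus :: "'v set \<Rightarrow> ('v \<times> 'v \<Rightarrow> int) \<Rightarrow> nat \<Rightarrow> nat \<Rightarrow> 'v \<times> 'v \<Rightarrow> complex" where
  "beta_plus V \<sigma> n t a =
     (let \<rho> = rho_par n t; \<theta> = theta_par n t;
          k = 1 / (sqrt (real n * c_par n t) * sin \<theta>);
          i = arc_class V \<sigma> a in
      complex_of_real (k *
        (if i = 1 then - \<rho> * (1 + cos \<theta>)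
         else if i = 2 then \<rho> * (1 + cos \<theta>)
         else if i = 3 then \<rho> * (1 - cos \<theta>)
         else if i = 4 then \<rho> - cos \<theta>
         else if i = 5 then 1 - \<rho> * cos \<theta>
         else 1 - cos \<theta>)))"

definition FP :: "'v set \<Rightarrow> ('v \<times> 'v \<Rightarrow> int) \<Rightarrow> nat \<Rightarrow> nat \<Rightarrow> real" where
  "FP V \<sigma> n t = (\<Sum>a \<in> Mcal V \<sigma>. (cmod (beta_plus V \<sigma> n t a))^2
                                 + (cmod (beta_plus V \<sigma> n t (rev_arc a)))^2)"

definition config :: "'v set \<Rightarrow> ('v \<times> 'v \<Rightarrow> int) \<Rightarrow> nat \<Rightarrow> nat \<Rightarrow> bool" where
  "config V \<sigma> n t \<longleftrightarrow> finite V \<and> card V = n + 1 \<and> sigma_ok V \<sigma> \<and>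
                        is_t_matching (marked_edges V \<sigma>) t"

definition t_of :: "real \<Rightarrow> real \<Rightarrow> nat \<Rightarrow> nat" where
  "t_of c \<alpha> n = nat \<lfloor>c * real n powr \<alpha>\<rfloor>"

end

theory Submission
  imports Defs
begin

lemma Mcal_card:
  assumes cf: "config V \<sigma> n t"
  shows "finite (Mcal V \<sigma>)" "card (Mcal V \<sigma>) = t"
proof -
  have fV: "finite V" using cf by (simp add: config_def)
  have "arcs V \<subseteq> V \<times> V" by (auto simp: arcs_def)
  hence fA: "finite (arcs V)" using fV by (meson finite_SigmaI finite_subset)
  show fM: "finite (Mcal V \<sigma>)" using fA by (simp add: Mcal_def)
  have ok: "sigma_ok V \<sigma>" using cf by (simp add: config_def)
  have inj: "inj_on (\<lambda>a. {fst a, snd a}) (Mcal V \<sigma>)"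
  proof (rule inj_onI)
    fix a b assume a: "a \<in> Mcal V \<sigma>" and b: "b \<in> Mcal V \<sigma>" and e: "{fst a, snd a} = {fst b, snd b}"
    obtain x y where ax: "a = (x,y)" by (cases a)
    obtain x' y' where bx: "b = (x',y')" by (cases b)
    have "a \<in> arcs V" "\<sigma> a = -1" "\<sigma> b = -1" using a b by (auto simp: Mcal_def)
    hence "\<sigma> (y,x) = 1" using ok ax unfolding sigma_ok_def rev_arc_def by fastforce
    moreover have "(x = x' \<and> y = y') \<or> (x = y' \<and> y = x')" using e ax bx by (auto simp: doubleton_eq_iff)
    ultimately show "a = b" using \<open>\<sigma> b = -1\<close> ax bx by auto
  qed
  have img: "(\<lambda>a. {fst a, snd a}) ` Mcal V \<sigma> = marked_edges V \<sigma>"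
  proof
    show "(\<lambda>a. {fst a, snd a}) ` Mcal V \<sigma> \<subseteq> marked_edges V \<sigma>"
    proof
      fix e assume "e \<in> (\<lambda>a. {fst a, snd a}) ` Mcal V \<sigma>"
      then obtain x y where xy: "(x,y) \<in> Mcal V \<sigma>" "e = {x,y}" by auto
      hence "(x,y) \<in> arcs V" "\<sigma> (x,y) = -1" by (auto simp: Mcal_def)
      moreover hence "\<sigma> (y,x) = 1" using ok unfolding sigma_ok_def rev_arc_def by fastforce
      ultimately have "\<sigma> (x, y) * \<sigma> (y, x) = -1" "(x,y) \<in> arcs V" by auto
      thus "e \<in> marked_edges V \<sigma>" using xy unfolding marked_edges_def by blast
    qed
  next
    show "marked_edges V \<sigma> \<subseteq> (\<lambda>a. {fst a, snd a}) ` Mcal V \<sigma>"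
    proof
      fix e assume "e \<in> marked_edges V \<sigma>"
      then obtain x y where xy: "e = {x,y}" "(x,y) \<in> arcs V" "\<sigma> (x, y) * \<sigma> (y, x) = -1"
        unfolding marked_edges_def by auto
      have yx: "(y,x) \<in> arcs V" using xy by (auto simp: arcs_def)
      have "\<sigma> (x,y) = 1 \<or> \<sigma> (x,y) = -1" "\<sigma> (y,x) = 1 \<or> \<sigma> (y,x) = -1"
        using ok xy(2) yx unfolding sigma_ok_def by auto
      hence "\<sigma> (x,y) = -1 \<or> \<sigma> (y,x) = -1" using xy(3) by auto
      thus "e \<in> (\<lambda>a. {fst a, snd a}) ` Mcal V \<sigma>"
      proof
        assume "\<sigma> (x,y) = -1"
        hence "(x,y) \<in> Mcal V \<sigma>" using xy by (simp add: Mcal_def)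
        thus ?thesis using xy by force
      next
        assume "\<sigma> (y,x) = -1"
        hence "(y,x) \<in> Mcal V \<sigma>" using yx by (simp add: Mcal_def)
        moreover have "e = {fst (y,x), snd (y,x)}" using xy by auto
        ultimately show ?thesis by blast
      qed
    qed
  qed
  have "card (marked_edges V \<sigma>) = t" using cf by (simp add: config_def is_t_matching_def)
  thus "card (Mcal V \<sigma>) = t" using card_image[OF inj] img by simp
qed

lemma FP_formula:
  assumes cf: "config V \<sigma> n t" and t2: "2 * t \<le> n + 1"
  shows "FP V \<sigma> n t = 2 * real t * (rho_par n t)^2 * (1 + cos (theta_par n t))^2
              / (real n * c_par n t * (sin (theta_par n t))^2)"
proof -
  define k where "k = 1 / (sqrt (real n * c_par n t) * sin (theta_par n t))"
  define v where "v = (k * (rho_par n t * (1 + cos (theta_par n t))))^2"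
  have ok: "sigma_ok V \<sigma>" using cf by (simp add: config_def)
  have tm: "(cmod (beta_plus V \<sigma> n t a))^2 + (cmod (beta_plus V \<sigma> n t (rev_arc a)))^2 = 2 * v"
    if a: "a \<in> Mcal V \<sigma>" for a
  proof -
    have c1: "arc_class V \<sigma> a = 1" using a by (simp add: arc_class_def Let_def)
    have "a \<in> arcs V" "\<sigma> a = -1" using a by (auto simp: Mcal_def)
    hence "\<sigma> (rev_arc a) = 1" using ok unfolding sigma_ok_def by auto
    hence "rev_arc a \<notin> Mcal V \<sigma>" by (auto simp: Mcal_def)
    hence c2: "arc_class V \<sigma> (rev_arc a) = 2" using a by (simp add: arc_class_def Let_def)
    have nr: "\<And>x. (cmod (complex_of_real x))^2 = x^2" by simp
    show ?thesis unfolding beta_plus_def Let_def c1 c2 k_def[symmetric] v_def nr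
      by (simp add: power2_eq_square)
  qed
  have "FP V \<sigma> n t = (\<Sum>a \<in> Mcal V \<sigma>. 2 * v)" unfolding FP_def using tm by simp
  also have "\<dots> = real t * (2 * v)" using Mcal_card[OF cf] by simp
  also have "\<dots> = 2 * real t * (rho_par n t)^2 * (1 + cos (theta_par n t))^2
              / (real n * c_par n t * (sin (theta_par n t))^2)"
  proof -
    have "real n + 1 - 2 * real t \<ge> 0" using t2 by linarith
    moreover have "2 * real t * (rho_par n t)^2 \<ge> 0" by simp
    ultimately have "c_par n t \<ge> 0" unfolding c_par_def by linarith
    hence "(sqrt (real n * c_par n t))^2 = real n * c_par n t" by simp
    thus ?thesis unfolding v_def k_def by (simp add: power_mult_distrib power_divide)
  qed
  finally show ?thesis .
qed

lemma F_bounds: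
  fixes n t :: nat
  assumes t1: "1 \<le> t" and t2: "2 * t \<le> n + 1" and n6: "n \<ge> 6"
  shows "\<bar>2 * real t * (rho_par n t)^2 * (1 + cos (theta_par n t))^2
              / (real n * c_par n t * (sin (theta_par n t))^2) - 1\<bar> \<le> 12 / real n"
proof -
  define N where "N = real n"
  define T where "T = real t"
  define q where "q = sqrt (Delta_par n t)"
  define \<rho> where "\<rho> = rho_par n t"
  define lm where "lm = lambda_par n t"
  define c where "c = c_par n t"
  define u where "u = N + 3 + q"
  have N6: "N \<ge> 6" using n6 unfolding N_def by simp
  have T1: "T \<ge> 1" using t1 unfolding T_def by simp
  have T2: "2 * T \<le> N + 1" using t2 unfolding T_def N_def by linarith
  have D: "Delta_par n t = (N+3)^2 - 16 * T"
    unfolding Delta_par_def s_par_def N_def T_def by (simp add: power2_eq_square algebra_simps)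
  have Dlo: "(N-1)^2 \<le> Delta_par n t" unfolding D using T2 by (simp add: power2_eq_square algebra_simps)
  have Dhi: "Delta_par n t < (N+3)^2" unfolding D using T1 by simp
  have q2: "q^2 = (N+3)^2 - 16 * T" unfolding q_def using Dlo D
    by (metis le_less_trans less_le_not_le power2_less_0 real_sqrt_pow2 not_le)
  have qlo: "q \<ge> N - 1" unfolding q_def using real_sqrt_le_mono[OF Dlo] N6 by simp
  have qhi: "q < N + 3" unfolding q_def using real_sqrt_less_mono[OF Dhi] N6 by simp
  have ulo: "u \<ge> 2*N + 2" and uhi: "u \<le> 2*N+6" using qlo qhi unfolding u_def by auto
  have upos: "u > 0" using ulo N6 by linarith
  have rho_eq: "\<rho> = 1 - 4 / u"
  proof -
    have "\<rho> * (4*T) = q - (N+3) + 4*T" unfolding \<rho>_def rho_par_def s_par_def N_def T_def q_def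
      using T1 T_def by (simp add: field_simps)
    hence "\<rho> * (4*T) * u = (q - (N+3) + 4*T) * (q + N + 3)" unfolding u_def by simp
    also have "\<dots> = q^2 - (N+3)^2 + 4 * T * u" unfolding u_def by (simp add: power2_eq_square algebra_simps)
    also have "\<dots> = 4*T*(u - 4)" unfolding q2 by (simp add: algebra_simps)
    finally have e: "(4*T) * (\<rho> * u) = (4*T) * (u - 4)" by (simp add: algebra_simps)
    have "\<rho> * u = u - 4" using mult_left_cancel[of "4*T", THEN iffD1, OF _ e] T1 by simp
    thus ?thesis using upos by (simp add: field_simps)
  qed
  have "4 / u \<le> 4 / (2*N+2)" using ulo N6 by (intro divide_left_mono) auto
  also have "4 / (2*N+2) = 2/(N+1)" using N6 by (simp add: field_simps)
  finally have fu: "4/u \<le> 2/(N+1)" .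
  have fu0: "4/u \<ge> 0" using upos by simp
  have rho_hi: "\<rho> \<le> 1" using rho_eq fu0 by simp
  have "\<rho> \<ge> 1 - 2/(N+1)" using rho_eq fu by simp
  also have "1 - 2/(N+1) = (N-1)/(N+1)" using N6 by (simp add: field_simps)
  finally have rho_lo: "\<rho> \<ge> (N-1)/(N+1)" .
  have rho0: "\<rho> \<ge> 0" using rho_lo N6 by (smt (verit) divide_nonneg_nonneg)
  have lam: "lm = (N - 3 + q) / (2*N)" unfolding lm_def lambda_par_def N_def q_def by simp
  have lam1: "1 - lm = 8 * T / (N * u)"
  proof -
    have "(N + 3 - q) * u = 16 * T" unfolding u_def using q2 by (simp add: power2_eq_square algebra_simps)
    hence b: "N + 3 - q = 16 * T / u" using upos by (simp add: field_simps)
    have a: "1 - lm = (N + 3 - q) / (2*N)" unfolding lam using N6 by (simp add: field_simps)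
    show ?thesis unfolding a b using N6 upos by (simp add: field_simps)
  qed
  have lampos: "1 - lm > 0" unfolding lam1 using T1 N6 upos by simp
  have lp: "1 + lm = (3*N-3+q)/(2*N)" unfolding lam using N6 by (simp add: field_simps)
  have "(4*N-4)/(2*N) \<le> (3*N-3+q)/(2*N)" using qlo N6 by (intro divide_right_mono) auto
  moreover have "2*(N-1)/N = (4*N-4)/(2*N)" using N6 by (simp add: field_simps)
  ultimately have lp_lo: "1 + lm \<ge> 2*(N-1)/N" unfolding lp by simp
  have "(3*N-3+q)/(2*N) \<le> (4*N)/(2*N)" using qhi N6 by (intro divide_right_mono) auto
  moreover have "(4*N)/(2*N) = 2" using N6 by simp
  ultimately have lp_hi: "1 + lm \<le> 2" unfolding lp by simp
  have lam_ge: "lm \<ge> -1" using lp_lo N6 by (smt (verit) divide_nonneg_nonneg)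
  have cos_eq: "cos (theta_par n t) = lm" unfolding theta_par_def lm_def[symmetric]
    using lam_ge lampos by (simp add: cos_arccos)
  have sin_eq: "(sin (theta_par n t))^2 = 1 - lm^2" unfolding theta_par_def lm_def[symmetric]
    using lam_ge lampos by (simp add: sin_arccos abs_le_iff power_le_one_iff abs_square_le_1)
  have c_hi: "c \<le> N + 1"
  proof -
    have "\<rho>^2 \<le> 1" using rho0 rho_hi by (simp add: power_le_one)
    hence "2*T*\<rho>^2 \<le> 2*T" using T1 by simp
    thus ?thesis unfolding c_def c_par_def \<rho>_def[symmetric] T_def[symmetric] N_def[symmetric] by simp
  qed
  have c_lo: "c \<ge> N - 3"
  proof -
    have "1 - \<rho>^2 = (1-\<rho>)*(1+\<rho>)" by (simp add: power2_eq_square algebra_simps)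
    also have "\<dots> \<le> (2/(N+1)) * 2" using rho_eq fu rho0 rho_hi N6 by (intro mult_mono) auto
    finally have a: "1 - \<rho>^2 \<le> 4/(N+1)" by simp
    have "2*T*(1-\<rho>^2) \<le> (N+1) * (4/(N+1))" using T2 T1 a rho_hi rho0
      by (intro mult_mono) (auto simp: power_le_one)
    also have "\<dots> = 4" using N6 by (simp add: field_simps)
    finally have "2*T*(1-\<rho>^2) \<le> 4" .
    thus ?thesis unfolding c_def c_par_def \<rho>_def[symmetric] T_def[symmetric] N_def[symmetric]
      by (simp add: algebra_simps)
  qed
  have cpos: "c > 0" using c_lo N6 by linarith
  have F_eq: "2 * real t * (rho_par n t)^2 * (1 + cos (theta_par n t))^2
              / (real n * c_par n t * (sin (theta_par n t))^2) = \<rho>^2 * (1+lm) * u / (4*c)"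
  proof -
    have h: "1 - lm^2 = (1-lm)*(1+lm)" by (simp add: power2_eq_square algebra_simps)
    have lp: "1 + lm > 0" using lp_lo N6 by (smt (verit) divide_pos_pos)
    have "2 * T * \<rho>^2 * (1 + lm)^2 / (N * c * (1 - lm^2))
        = (2 * T * \<rho>^2 * (1 + lm) * (1 + lm)) / ((N * c * (1 - lm)) * (1 + lm))"
      unfolding h unfolding power2_eq_square by (simp only: mult_ac)
    also have "\<dots> = 2 * T * \<rho>^2 * (1 + lm) / (N * c * (1 - lm))"
      using lp by (intro nonzero_mult_divide_mult_cancel_right) simp
    also have "\<dots> = \<rho>^2 * (1+lm) * u / (4*c)" unfolding lam1 using N6 T1 upos cpos
      by (simp add: field_simps)
    finally show ?thesis unfolding cos_eq sin_eq T_def N_def \<rho>_def c_def .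
  qed
  have up: "\<rho>^2 * (1+lm) * u / (4*c) \<le> (1 * 2 * (2*N+6)) / (4*(N-3))"
  proof (rule frac_le)
    show "\<rho>^2 * (1+lm) * u \<le> 1 * 2 * (2*N+6)" using rho0 rho_hi lp_hi uhi upos lp_lo N6 lam_ge
      by (intro mult_mono) (auto simp: power_le_one)
  qed (use N6 c_lo in auto)
  have up2: "(1 * 2 * (2*N+6)) / (4*(N-3)) \<le> 1 + 12/N" using N6 by (simp add: field_simps)
  have lo: "((N-1)/(N+1))^2 * (2*(N-1)/N) * (2*N+2) / (4*(N+1)) \<le> \<rho>^2 * (1+lm) * u / (4*c)"
  proof (rule frac_le)
    show "((N-1)/(N+1))^2 * (2*(N-1)/N) * (2*N+2) \<le> \<rho>^2 * (1+lm) * u"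
      using rho_lo lp_lo ulo N6 lam_ge by (intro mult_mono power_mono) auto
  qed (use N6 c_hi cpos rho0 lp_lo ulo lam_ge in auto)
  have lo2: "1 - 5/N \<le> ((N-1)/(N+1))^2 * (2*(N-1)/N) * (2*N+2) / (4*(N+1))"
  proof -
    have nz: "N > 0" "N + 1 > 0" using N6 by auto
    have e: "((N-1)/(N+1))^2 * (2*(N-1)/N) * (2*N+2) / (4*(N+1)) = ((N-1)^2*(2*(N-1))*(2*N+2)) / ((N+1)^2*N*(4*(N+1)))"
      by (simp add: power_divide)
    have "(1 - 5/N) * ((N+1)^2*N*(4*(N+1))) = (N-5)*(N+1)^2*(4*(N+1))" using nz by (simp add: field_simps)
    also have "\<dots> \<le> (N-1)^2*(2*(N-1))*(2*N+2)"
    proof -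
      have "(N-1)^2*(2*(N-1))*(2*N+2) - (N-5)*(N+1)^2*(4*(N+1)) = 4*(N+1)*(12*N+4)"
        by (simp add: power2_eq_square algebra_simps)
      moreover have "4*(N+1)*(12*N+4) \<ge> 0" using nz by simp
      ultimately show ?thesis by linarith
    qed
    finally show ?thesis unfolding e using nz by (simp add: le_divide_eq)
  qed
  have fN: "5/N \<le> 12/N" using N6 by (simp add: divide_right_mono)
  have "\<bar>\<rho>^2 * (1+lm) * u / (4*c) - 1\<bar> \<le> 12/N" using up up2 lo lo2 fN by linarith
  thus ?thesis using F_eq N_def by simp
qed


theorem mainTheorem9:
  fixes c \<alpha> :: real
  assumes "c > 0" and "0 \<le> \<alpha>" and "\<alpha> \<le> 1"
  shows "(\<forall>n (V :: 'v set) \<sigma>.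
            config V \<sigma> n (t_of c \<alpha> n) \<and> 1 \<le> t_of c \<alpha> n \<and> 2 * t_of c \<alpha> n \<le> n + 1 \<longrightarrow>
            FP V \<sigma> n (t_of c \<alpha> n) =
              2 * real (t_of c \<alpha> n) * (rho_par n (t_of c \<alpha> n))^2
                * (1 + cos (theta_par n (t_of c \<alpha> n)))^2
              / (real n * c_par n (t_of c \<alpha> n) * (sin (theta_par n (t_of c \<alpha> n)))^2))
       \<and> (\<forall>\<epsilon> > 0. \<exists>N. \<forall>n \<ge> N. \<forall>(V :: 'v set) \<sigma>.
            config V \<sigma> n (t_of c \<alpha> n) \<and> 1 \<le> t_of c \<alpha> n \<and> 2 * t_of c \<alpha> n \<le> n + 1 \<longrightarrow>
            \<bar>FP V \<sigma> n (t_of c \<alpha> n) - 1\<bar> < \<epsilon>)"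
proof (intro conjI)
  show "\<forall>n (V :: 'v set) \<sigma>.
            config V \<sigma> n (t_of c \<alpha> n) \<and> 1 \<le> t_of c \<alpha> n \<and> 2 * t_of c \<alpha> n \<le> n + 1 \<longrightarrow>
            FP V \<sigma> n (t_of c \<alpha> n) =
              2 * real (t_of c \<alpha> n) * (rho_par n (t_of c \<alpha> n))^2
                * (1 + cos (theta_par n (t_of c \<alpha> n)))^2
              / (real n * c_par n (t_of c \<alpha> n) * (sin (theta_par n (t_of c \<alpha> n)))^2)"
    using FP_formula by blast
  show "\<forall>\<epsilon> > 0. \<exists>N. \<forall>n \<ge> N. \<forall>(V :: 'v set) \<sigma>.
            config V \<sigma> n (t_of c \<alpha> n) \<and> 1 \<le> t_of c \<alpha> n \<and> 2 * t_of c \<alpha> n \<le> n + 1 \<longrightarrow>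
            \<bar>FP V \<sigma> n (t_of c \<alpha> n) - 1\<bar> < \<epsilon>"
  proof (intro allI impI)
    fix \<epsilon> :: real assume ep: "\<epsilon> > 0"
    define N where "N = max 6 (nat \<lceil>12/\<epsilon>\<rceil> + 1)"
    show "\<exists>N. \<forall>n \<ge> N. \<forall>(V :: 'v set) \<sigma>.
            config V \<sigma> n (t_of c \<alpha> n) \<and> 1 \<le> t_of c \<alpha> n \<and> 2 * t_of c \<alpha> n \<le> n + 1 \<longrightarrow>
            \<bar>FP V \<sigma> n (t_of c \<alpha> n) - 1\<bar> < \<epsilon>"
    proof (intro exI allI impI)
      fix n :: nat and V :: "'v set" and \<sigma>
      assume nN: "n \<ge> N" and h: "config V \<sigma> n (t_of c \<alpha> n) \<and> 1 \<le> t_of c \<alpha> n \<and> 2 * t_of c \<alpha> n \<le> n + 1"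
      have n6: "n \<ge> 6" using nN unfolding N_def by simp
      have "real n \<ge> real (nat \<lceil>12/\<epsilon>\<rceil> + 1)" using nN unfolding N_def by simp
      hence gt: "real n > 12/\<epsilon>" by linarith
      have "12 / real n < \<epsilon>" using gt ep n6 by (simp add: divide_less_eq mult.commute)
      moreover have "\<bar>FP V \<sigma> n (t_of c \<alpha> n) - 1\<bar> \<le> 12 / real n"
        using FP_formula[of V \<sigma> n "t_of c \<alpha> n"] F_bounds[of "t_of c \<alpha> n" n] h n6 by simp
      ultimately show "\<bar>FP V \<sigma> n (t_of c \<alpha> n) - 1\<bar> < \<epsilon>" by linarith
    qed
  qed
qed

end
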